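(* Let $(P_n)_n$ be a sequence of pairwise distinct polynomials in $\mathbb{Z}[X_1,\dots,X_m]$ such that $\sup_n \deg P_n<\infty$. Then there exist complex numbers $\xi_1,\dots,\xi_m$, algebraically independent (over $\mathbb{Q}$), such that the sequence $(|P_n(\xi_1,\dots,\xi_m)|)_n$ is unbounded.
   Context: $\deg$ denotes total degree. *)

theory Defs
  imports Complex_Main "HOL-Library.Poly_Mapping"
begin

(* Multivariate polynomials with coefficients in 'a in the variables X_0, X_1, ...,
   represented (as in the AFP entry Polynomials) as finitely supported maps from
   monomials (finitely supported exponent vectors, nat =>0 nat) to coefficients. *)

definition mpoly_vars :: "((nat \<Rightarrow>\<^sub>0 nat) \<Rightarrow>\<^sub>0 'a::zero) \<Rightarrow> nat set" where
  "mpoly_vars p = (\<Union>\<alpha>\<in>Poly_Mapping.keys p. Poly_Mapping.keys \<alpha>)"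

definition mon_deg :: "(nat \<Rightarrow>\<^sub>0 nat) \<Rightarrow> nat" where
  "mon_deg \<alpha> = (\<Sum>i\<in>Poly_Mapping.keys \<alpha>. Poly_Mapping.lookup \<alpha> i)"

(* total degree; the zero polynomial gets degree 0 *)
definition total_deg :: "((nat \<Rightarrow>\<^sub>0 nat) \<Rightarrow>\<^sub>0 'a::zero) \<Rightarrow> nat" where
  "total_deg p = Max (insert 0 (mon_deg ` Poly_Mapping.keys p))"

definition mpoly_eval ::
  "('a::zero \<Rightarrow> 'b::comm_ring_1) \<Rightarrow> ((nat \<Rightarrow>\<^sub>0 nat) \<Rightarrow>\<^sub>0 'a) \<Rightarrow> (nat \<Rightarrow> 'b) \<Rightarrow> 'b" where
  "mpoly_eval c p xi = (\<Sum>\<alpha>\<in>Poly_Mapping.keys p. c (Poly_Mapping.lookup p \<alpha>) * (\<Prod>i\<in>Poly_Mapping.keys \<alpha>. xi i ^ Poly_Mapping.lookup \<alpha> i))"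

definition alg_indep_Q :: "nat \<Rightarrow> (nat \<Rightarrow> complex) \<Rightarrow> bool" where
  "alg_indep_Q m xi \<longleftrightarrow>
     (\<forall>p :: (nat \<Rightarrow>\<^sub>0 nat) \<Rightarrow>\<^sub>0 rat. p \<noteq> 0 \<longrightarrow> mpoly_vars p \<subseteq> {..<m} \<longrightarrow>
        mpoly_eval of_rat p xi \<noteq> 0)"

end

theory Submission
  imports Defs "HOL-Computational_Algebra.Polynomial" "HOL-Analysis.Continuum_Not_Denumerable" "HOL-Library.FuncSet"
begin

lemma generic_point:
  fixes I :: "'i set" and A :: "'i \<Rightarrow> 'b set" and c :: "'i \<Rightarrow> 'b \<Rightarrow> real"
    and E :: "'b \<Rightarrow> nat \<Rightarrow> nat"
  assumes "countable I"
    and "\<And>i. i \<in> I \<Longrightarrow> finite (A i)"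
    and "\<And>i a b. i \<in> I \<Longrightarrow> a \<in> A i \<Longrightarrow> b \<in> A i \<Longrightarrow> (\<forall>j<m. E a j = E b j) \<Longrightarrow> a = b"
    and "\<And>i. i \<in> I \<Longrightarrow> \<exists>a\<in>A i. c i a \<noteq> 0"
  shows "\<exists>xi. \<forall>i\<in>I. (\<Sum>a\<in>A i. c i a * (\<Prod>j<m. xi j ^ E a j)) \<noteq> 0"
  using assms
proof (induction m arbitrary: A)
  case 0
  show ?case
  proof (intro exI ballI)
    fix i assume i: "i \<in> I"
    from "0.prems"(4)[OF i] obtain a where a: "a \<in> A i" "c i a \<noteq> 0" by blast
    have "A i = {a}" using "0.prems"(3)[OF i] a(1) by blast
    then show "(\<Sum>a\<in>A i. c i a * (\<Prod>j<0. (\<lambda>_. 0::real) j ^ E a j)) \<noteq> 0" using a by simp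
  qed
next
  case (Suc m)
  have "\<forall>i\<in>I. \<exists>a\<in>A i. c i a \<noteq> 0" using Suc.prems(4) by blast
  then obtain a0 where a0: "\<And>i. i \<in> I \<Longrightarrow> a0 i \<in> A i \<and> c i (a0 i) \<noteq> 0" by metis
  define A' where "A' i = {a \<in> A i. E a m = E (a0 i) m}" for i
  have "\<exists>xi. \<forall>i\<in>I. (\<Sum>a\<in>A' i. c i a * (\<Prod>j<m. xi j ^ E a j)) \<noteq> 0"
  proof (rule Suc.IH)
    show "countable I" by fact
    show "finite (A' i)" if "i \<in> I" for i using Suc.prems(2)[OF that] unfolding A'_def by simp
    show "a = b" if "i \<in> I" "a \<in> A' i" "b \<in> A' i" "\<forall>j<m. E a j = E b j" for i a b
      using Suc.prems(3)[of i a b] that unfolding A'_def by (auto simp: less_Suc_eq)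
    show "\<exists>a\<in>A' i. c i a \<noteq> 0" if "i \<in> I" for i using a0[OF that] unfolding A'_def by auto
  qed
  then obtain xi where xi: "\<And>i. i \<in> I \<Longrightarrow> (\<Sum>a\<in>A' i. c i a * (\<Prod>j<m. xi j ^ E a j)) \<noteq> 0" by blast
  define q where "q i = (\<Sum>a\<in>A i. monom (c i a * (\<Prod>j<m. xi j ^ E a j)) (E a m))" for i
  have coeff_q: "coeff (q i) (E (a0 i) m) = (\<Sum>a\<in>A' i. c i a * (\<Prod>j<m. xi j ^ E a j))" if "i \<in> I" for i
    unfolding q_def coeff_sum coeff_monom A'_def using Suc.prems(2)[OF that]
    by (simp add: sum.inter_filter[symmetric] eq_commute)
  have qnz: "q i \<noteq> 0" if "i \<in> I" for i
    using coeff_q[OF that] xi[OF that] by auto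
  have "countable (\<Union>i\<in>I. {x. poly (q i) x = 0})"
    using qnz \<open>countable I\<close> by (intro countable_UN[OF \<open>countable I\<close>] countable_finite poly_roots_finite) auto
  then obtain t where t: "t \<notin> (\<Union>i\<in>I. {x. poly (q i) x = 0})"
    using uncountable_UNIV_real by (metis UNIV_eq_I)
  show ?case
  proof (intro exI ballI)
    fix i assume i: "i \<in> I"
    have "(\<Sum>a\<in>A i. c i a * (\<Prod>j<Suc m. (xi(m := t)) j ^ E a j)) = poly (q i) t"
      unfolding q_def poly_sum poly_monom
      by (intro sum.cong refl) (simp add: prod.lessThan_Suc mult.assoc)
    then show "(\<Sum>a\<in>A i. c i a * (\<Prod>j<Suc m. (xi(m := t)) j ^ E a j)) \<noteq> 0"
      using t i by auto
  qed
qed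


lemma lookup_le_mon_deg: "Poly_Mapping.lookup \<alpha> k \<le> mon_deg \<alpha>"
proof (cases "k \<in> Poly_Mapping.keys \<alpha>")
  case True
  then show ?thesis unfolding mon_deg_def by (intro member_le_sum) auto
next
  case False
  then show ?thesis by (simp add: in_keys_iff)
qed

lemma mon_eq_if_lookup_eq:
  assumes "Poly_Mapping.keys \<alpha> \<subseteq> {..<m}" "Poly_Mapping.keys \<beta> \<subseteq> {..<m}"
    "\<forall>j<m. Poly_Mapping.lookup \<alpha> j = Poly_Mapping.lookup \<beta> j"
  shows "\<alpha> = \<beta>"
proof (rule poly_mapping_eqI)
  fix k show "Poly_Mapping.lookup \<alpha> k = Poly_Mapping.lookup \<beta> k"
  proof (cases "k < m")
    case False
    then have "k \<notin> Poly_Mapping.keys \<alpha>" "k \<notin> Poly_Mapping.keys \<beta>" using assms by auto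
    then show ?thesis by (simp add: in_keys_iff)
  qed (use assms in auto)
qed

lemma finite_mons: "finite {\<alpha>::nat \<Rightarrow>\<^sub>0 nat. Poly_Mapping.keys \<alpha> \<subseteq> {..<m} \<and> mon_deg \<alpha> \<le> D}"
  (is "finite ?S")
proof -
  let ?g = "\<lambda>\<alpha>. map (Poly_Mapping.lookup \<alpha>) [0..<m]"
  have "inj_on ?g ?S"
  proof (rule inj_onI)
    fix a b assume "a \<in> ?S" "b \<in> ?S" "?g a = ?g b"
    then show "a = b" by (intro mon_eq_if_lookup_eq[of _ m]) (simp_all add: map_eq_conv)
  qed
  moreover have "?g ` ?S \<subseteq> {xs. set xs \<subseteq> {0..D} \<and> length xs = m}"
  proof
    fix xs assume "xs \<in> ?g ` ?S"
    then obtain \<alpha> where a: "\<alpha> \<in> ?S" "xs = ?g \<alpha>" by blast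
    have "Poly_Mapping.lookup \<alpha> k \<le> D" for k
      using lookup_le_mon_deg[of \<alpha> k] a(1) by simp
    then show "xs \<in> {xs. set xs \<subseteq> {0..D} \<and> length xs = m}" using a(2) by auto
  qed
  moreover have "finite {xs. set xs \<subseteq> {0..D} \<and> length xs = m}"
    by (intro finite_lists_length_eq) auto
  ultimately show ?thesis by (meson finite_imageD finite_subset)
qed
lemma BW_finite:
  fixes f :: "nat \<Rightarrow> 'a \<Rightarrow> real"
  assumes "finite M" "\<And>n \<alpha>. \<alpha> \<in> M \<Longrightarrow> \<bar>f n \<alpha>\<bar> \<le> B"
  shows "\<exists>r u. strict_mono r \<and> (\<forall>\<alpha>\<in>M. (\<lambda>k. f (r k) \<alpha>) \<longlonglongrightarrow> u \<alpha>)"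
  using assms
proof (induction M rule: finite_induct)
  case empty
  show ?case by (intro exI[of _ id]) (auto simp: strict_mono_def)
next
  case (insert a M)
  then obtain r u where r: "strict_mono r" "\<forall>\<alpha>\<in>M. (\<lambda>k. f (r k) \<alpha>) \<longlonglongrightarrow> u \<alpha>" by auto
  obtain s where s: "strict_mono s" "monoseq (\<lambda>n. f (r (s n)) a)"
    using seq_monosub[of "\<lambda>k. f (r k) a"] by blast
  have "Bseq (\<lambda>n. f (r (s n)) a)"
    using insert.prems by (intro BseqI'[of _ B]) auto
  then have "convergent (\<lambda>n. f (r (s n)) a)" using s(2) Bseq_monoseq_convergent by blast
  then obtain L where L: "(\<lambda>n. f (r (s n)) a) \<longlonglongrightarrow> L" by (auto simp: convergent_def)
  show ?case
  proof (intro exI conjI ballI)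
    show "strict_mono (r \<circ> s)" using r(1) s(1) by (rule strict_mono_o)
    fix \<alpha> assume "\<alpha> \<in> insert a M"
    then show "(\<lambda>k. f ((r \<circ> s) k) \<alpha>) \<longlonglongrightarrow> (u(a := L)) \<alpha>"
    proof
      assume "\<alpha> = a" then show ?thesis using L by simp
    next
      assume "\<alpha> \<in> M"
      then have "((\<lambda>k. f (r k) \<alpha>) \<circ> s) \<longlonglongrightarrow> u \<alpha>" using r(2) s(1) LIMSEQ_subseq_LIMSEQ by blast
      then show ?thesis using \<open>\<alpha> \<in> M\<close> insert.hyps(2) by (auto simp: comp_def)
    qed
  qed
qed

lemma countable_rat_polys:
  "countable {p :: (nat \<Rightarrow>\<^sub>0 nat) \<Rightarrow>\<^sub>0 rat. mpoly_vars p \<subseteq> {..<m}}" (is "countable ?S")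
proof -
  define g where "g p = (\<lambda>\<alpha>. (map (Poly_Mapping.lookup \<alpha>) [0..<m], Poly_Mapping.lookup p \<alpha>)) ` Poly_Mapping.keys p"
    for p :: "(nat \<Rightarrow>\<^sub>0 nat) \<Rightarrow>\<^sub>0 rat"
  have "g ` ?S \<subseteq> Collect finite" unfolding g_def by auto
  then have "countable (g ` ?S)"
    by (rule countable_subset) (rule countable_Collect_finite)
  moreover have "inj_on g ?S"
  proof (rule inj_onI)
    fix p q assume p: "p \<in> ?S" and q: "q \<in> ?S" and eq: "g p = g q"
    have kp: "Poly_Mapping.keys \<alpha> \<subseteq> {..<m}" if "\<alpha> \<in> Poly_Mapping.keys p" for \<alpha>
      using p that unfolding mpoly_vars_def by auto
    have kq: "Poly_Mapping.keys \<alpha> \<subseteq> {..<m}" if "\<alpha> \<in> Poly_Mapping.keys q" for \<alpha>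
      using q that unfolding mpoly_vars_def by auto
    have sub: "Poly_Mapping.lookup p \<alpha> = Poly_Mapping.lookup q \<alpha>"
      if "\<alpha> \<in> Poly_Mapping.keys p" "g p = g q"
        "\<And>\<alpha>. \<alpha> \<in> Poly_Mapping.keys p \<Longrightarrow> Poly_Mapping.keys \<alpha> \<subseteq> {..<m}"
        "\<And>\<alpha>. \<alpha> \<in> Poly_Mapping.keys q \<Longrightarrow> Poly_Mapping.keys \<alpha> \<subseteq> {..<m}"
      for p q :: "(nat \<Rightarrow>\<^sub>0 nat) \<Rightarrow>\<^sub>0 rat" and \<alpha>
    proof -
      have "(map (Poly_Mapping.lookup \<alpha>) [0..<m], Poly_Mapping.lookup p \<alpha>) \<in> g q"
        using that(1,2) unfolding g_def by auto
      then obtain \<beta> where b: "\<beta> \<in> Poly_Mapping.keys q"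
        "map (Poly_Mapping.lookup \<alpha>) [0..<m] = map (Poly_Mapping.lookup \<beta>) [0..<m]"
        "Poly_Mapping.lookup p \<alpha> = Poly_Mapping.lookup q \<beta>"
        unfolding g_def by auto
      have "\<alpha> = \<beta>"
        using b(2) that(1,3,4) b(1) by (intro mon_eq_if_lookup_eq[of _ m]) (auto simp: map_eq_conv)
      then show ?thesis using b(3) by simp
    qed
    show "p = q"
    proof (rule poly_mapping_eqI)
      fix \<alpha>
      show "Poly_Mapping.lookup p \<alpha> = Poly_Mapping.lookup q \<alpha>"
      proof (cases "\<alpha> \<in> Poly_Mapping.keys p")
        case True then show ?thesis using sub[of \<alpha> p q] eq kp kq by blast
      next
        case F: False
        show ?thesis
        proof (cases "\<alpha> \<in> Poly_Mapping.keys q")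
          case True then show ?thesis using sub[of \<alpha> q p] eq kp kq by metis
        next
          case False then show ?thesis using F by (simp add: in_keys_iff)
        qed
      qed
    qed
  qed
  ultimately show ?thesis by (rule countable_image_inj_on)
qed


lemma of_rat_complex: "(of_rat q :: complex) = of_real (of_rat q)"
  by (cases q) (simp add: of_rat_rat)

lemma eventually_not_in_finite:
  assumes "strict_mono r" "finite (Z::nat set)"
  shows "eventually (\<lambda>k. r k \<notin> Z) sequentially"
proof -
  obtain b where b: "\<forall>n\<in>Z. n < b" using assms(2) finite_nat_set_iff_bounded by blast
  show ?thesis
  proof (rule eventually_sequentiallyI[of b])
    fix k assume "b \<le> k"
    then have "b \<le> r k" using seq_suble[OF assms(1), of k] by linarith
    then show "r k \<notin> Z" using b by auto
  qed
qed

lemma prod_keys_complex: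
  fixes m :: nat and xi :: "nat \<Rightarrow> real"
  assumes "Poly_Mapping.keys \<alpha> \<subseteq> {..<m}"
  shows "(\<Prod>i\<in>Poly_Mapping.keys \<alpha>. (complex_of_real (xi i)) ^ Poly_Mapping.lookup \<alpha> i)
       = complex_of_real (\<Prod>j<m. xi j ^ Poly_Mapping.lookup \<alpha> j)"
proof -
  have "(\<Prod>i\<in>Poly_Mapping.keys \<alpha>. (complex_of_real (xi i)) ^ Poly_Mapping.lookup \<alpha> i)
      = (\<Prod>i<m. (complex_of_real (xi i)) ^ Poly_Mapping.lookup \<alpha> i)"
    using assms by (intro prod.mono_neutral_left finite_lessThan) (auto simp: in_keys_iff)
  then show ?thesis by simp
qed


theorem proposition2p6:
  fixes m :: nat and P :: "nat \<Rightarrow> (nat \<Rightarrow>\<^sub>0 nat) \<Rightarrow>\<^sub>0 int"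
  assumes distinct: "inj P"
    and vars: "\<And>n. mpoly_vars (P n) \<subseteq> {..<m}"
    and deg: "\<exists>D. \<forall>n. total_deg (P n) \<le> D"
  shows "\<exists>xi :: nat \<Rightarrow> complex. alg_indep_Q m xi \<and>
           \<not> bdd_above (range (\<lambda>n. cmod (mpoly_eval of_int (P n) xi)))"
proof -
  obtain D where D: "\<And>n. total_deg (P n) \<le> D" using deg by blast
  define Mons where "Mons = {\<alpha>::nat \<Rightarrow>\<^sub>0 nat. Poly_Mapping.keys \<alpha> \<subseteq> {..<m} \<and> mon_deg \<alpha> \<le> D}"
  have keysP: "Poly_Mapping.keys (P n) \<subseteq> Mons" for n
  proof
    fix \<alpha> assume a: "\<alpha> \<in> Poly_Mapping.keys (P n)"
    have "Poly_Mapping.keys \<alpha> \<subseteq> {..<m}" using vars[of n] a unfolding mpoly_vars_def by auto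
    moreover have "mon_deg \<alpha> \<le> total_deg (P n)"
      unfolding total_deg_def using a by (intro Max_ge) auto
    ultimately show "\<alpha> \<in> Mons" using D[of n] unfolding Mons_def by auto
  qed
  define M where "M = (\<Union>n. Poly_Mapping.keys (P n))"
  have MMons: "M \<subseteq> Mons" using keysP unfolding M_def by auto
  have finM: "finite M" using MMons finite_mons[of m D] unfolding Mons_def by (rule finite_subset)
  have keysM: "Poly_Mapping.keys \<alpha> \<subseteq> {..<m}" if "\<alpha> \<in> M" for \<alpha>
    using that MMons unfolding Mons_def by auto
  define c where "c n \<alpha> = real_of_int (Poly_Mapping.lookup (P n) \<alpha>)" for n \<alpha>
  define N where "N n = (\<Sum>\<alpha>\<in>M. \<bar>c n \<alpha>\<bar>)" for n
  have N_nonneg: "N n \<ge> 0" for n unfolding N_def by (intro sum_nonneg) auto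
  have c_le_N: "\<bar>c n \<alpha>\<bar> \<le> N n" if "\<alpha> \<in> M" for n \<alpha>
    unfolding N_def using that finM by (intro member_le_sum) auto
  have c_out: "c n \<alpha> = 0" if "\<alpha> \<notin> M" for n \<alpha>
    using that unfolding c_def M_def by (auto simp: in_keys_iff)
  have finN: "finite {n. N n \<le> B}" for B
  proof -
    define K where "K = \<lceil>\<bar>B\<bar>\<rceil>"
    define F where "F = {p :: (nat \<Rightarrow>\<^sub>0 nat) \<Rightarrow>\<^sub>0 int. Poly_Mapping.keys p \<subseteq> M \<and>
                          (\<forall>\<alpha>\<in>M. \<bar>Poly_Mapping.lookup p \<alpha>\<bar> \<le> K)}"
    have "inj_on (\<lambda>p. restrict (Poly_Mapping.lookup p) M) F"
    proof (rule inj_onI)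
      fix p q assume p: "p \<in> F" and q: "q \<in> F"
        and eq: "restrict (Poly_Mapping.lookup p) M = restrict (Poly_Mapping.lookup q) M"
      show "p = q"
      proof (rule poly_mapping_eqI)
        fix \<alpha> show "Poly_Mapping.lookup p \<alpha> = Poly_Mapping.lookup q \<alpha>"
        proof (cases "\<alpha> \<in> M")
          case True then show ?thesis using fun_cong[OF eq, of \<alpha>] by simp
        next
          case False
          then have "\<alpha> \<notin> Poly_Mapping.keys p" "\<alpha> \<notin> Poly_Mapping.keys q" using p q unfolding F_def by auto
          then show ?thesis by (simp add: in_keys_iff)
        qed
      qed
    qed
    moreover have "(\<lambda>p. restrict (Poly_Mapping.lookup p) M) ` F \<subseteq> PiE M (\<lambda>_. {-K..K})"
      unfolding F_def by (auto simp: abs_le_iff)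
    moreover have "finite (PiE M (\<lambda>_. {-K..K}))" using finM by (intro finite_PiE) auto
    ultimately have "finite F" by (meson finite_imageD finite_subset)
    then have "finite (P -` F)" using distinct by (rule finite_vimageI)
    moreover have "{n. N n \<le> B} \<subseteq> P -` F"
    proof
      fix n assume n: "n \<in> {n. N n \<le> B}"
      have "\<bar>Poly_Mapping.lookup (P n) \<alpha>\<bar> \<le> K" if "\<alpha> \<in> M" for \<alpha>
      proof -
        have "real_of_int \<bar>Poly_Mapping.lookup (P n) \<alpha>\<bar> \<le> \<bar>B\<bar>"
          using c_le_N[OF that, of n] n unfolding c_def by auto
        also have "\<dots> \<le> real_of_int K" unfolding K_def by simp
        finally show ?thesis by linarith
      qed
      moreover have "Poly_Mapping.keys (P n) \<subseteq> M" unfolding M_def by auto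
      ultimately show "n \<in> P -` F" unfolding F_def by auto
    qed
    ultimately show ?thesis by (rule finite_subset[rotated])
  qed
  define f where "f n \<alpha> = c n \<alpha> / N n" for n \<alpha>
  have f_bound: "\<bar>f n \<alpha>\<bar> \<le> 1" if "\<alpha> \<in> M" for n \<alpha>
  proof (cases "N n = 0")
    case False
    then have pos: "N n > 0" using N_nonneg[of n] by linarith
    have "\<bar>f n \<alpha>\<bar> = \<bar>c n \<alpha>\<bar> / N n" unfolding f_def using pos by (simp add: abs_divide)
    also have "\<dots> \<le> 1" using c_le_N[OF that, of n] pos by (simp add: divide_le_eq_1)
    finally show ?thesis .
  next
    case True
    then show ?thesis unfolding f_def by simp
  qed
  obtain r u where r: "strict_mono r" and ru: "\<And>\<alpha>. \<alpha> \<in> M \<Longrightarrow> (\<lambda>k. f (r k) \<alpha>) \<longlonglongrightarrow> u \<alpha>"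
    using BW_finite[where f=f and B=1, OF finM f_bound] by blast
  have Npos_ev: "eventually (\<lambda>k. N (r k) > B) sequentially" for B
    by (rule eventually_mono[OF eventually_not_in_finite[OF r finN[of B]]]) simp
  have "\<exists>\<alpha>0\<in>M. u \<alpha>0 \<noteq> 0"
  proof (rule ccontr)
    assume "\<not> ?thesis"
    then have u0: "\<And>\<alpha>. \<alpha> \<in> M \<Longrightarrow> u \<alpha> = 0" by blast
    have "(\<lambda>k. \<Sum>\<alpha>\<in>M. \<bar>f (r k) \<alpha>\<bar>) \<longlonglongrightarrow> (\<Sum>\<alpha>\<in>M. \<bar>u \<alpha>\<bar>)"
      by (intro tendsto_sum tendsto_rabs ru)
    then have lim0: "(\<lambda>k. \<Sum>\<alpha>\<in>M. \<bar>f (r k) \<alpha>\<bar>) \<longlonglongrightarrow> 0" using u0 by simp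
    have "eventually (\<lambda>k. (\<Sum>\<alpha>\<in>M. \<bar>f (r k) \<alpha>\<bar>) = 1) sequentially"
      using Npos_ev[of 0]
    proof (rule eventually_mono)
      fix k assume pos: "N (r k) > 0"
      have "(\<Sum>\<alpha>\<in>M. \<bar>f (r k) \<alpha>\<bar>) = (\<Sum>\<alpha>\<in>M. \<bar>c (r k) \<alpha>\<bar> / N (r k))"
        unfolding f_def using pos by (intro sum.cong refl) (simp add: abs_divide)
      also have "\<dots> = 1" using pos unfolding N_def[symmetric] sum_divide_distrib[symmetric] by simp
      finally show "(\<Sum>\<alpha>\<in>M. \<bar>f (r k) \<alpha>\<bar>) = 1" .
    qed
    then have "(\<lambda>k. \<Sum>\<alpha>\<in>M. \<bar>f (r k) \<alpha>\<bar>) \<longlonglongrightarrow> 1"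
      by (rule tendsto_eventually)
    from LIMSEQ_unique[OF lim0 this] show False by simp
  qed
  then obtain \<alpha>0 where a0: "\<alpha>0 \<in> M" "u \<alpha>0 \<noteq> 0" by blast
  define Q where "Q = {p :: (nat \<Rightarrow>\<^sub>0 nat) \<Rightarrow>\<^sub>0 rat. p \<noteq> 0 \<and> mpoly_vars p \<subseteq> {..<m}}"
  define I where "I = insert None (Some ` Q)"
  define A where "A i = (case i of None \<Rightarrow> M | Some p \<Rightarrow> Poly_Mapping.keys p)" for i :: "((nat \<Rightarrow>\<^sub>0 nat) \<Rightarrow>\<^sub>0 rat) option"
  define cc where "cc i \<alpha> = (case i of None \<Rightarrow> u \<alpha> | Some p \<Rightarrow> real_of_rat (Poly_Mapping.lookup p \<alpha>))" for i :: "((nat \<Rightarrow>\<^sub>0 nat) \<Rightarrow>\<^sub>0 rat) option" and \<alpha>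
  have "\<exists>xi. \<forall>i\<in>I. (\<Sum>a\<in>A i. cc i a * (\<Prod>j<m. xi j ^ Poly_Mapping.lookup a j)) \<noteq> 0"
  proof (rule generic_point)
    have "countable Q" unfolding Q_def
      by (rule countable_subset[OF _ countable_rat_polys[of m]]) auto
    then show "countable I" unfolding I_def by auto
    show "finite (A i)" if "i \<in> I" for i using finM unfolding A_def by (auto split: option.splits)
    have kA: "Poly_Mapping.keys a \<subseteq> {..<m}" if "i \<in> I" "a \<in> A i" for i a
      using that keysM unfolding A_def I_def Q_def mpoly_vars_def by (auto split: option.splits)
    show "a = b" if "i \<in> I" "a \<in> A i" "b \<in> A i" "\<forall>j<m. Poly_Mapping.lookup a j = Poly_Mapping.lookup b j" for i a b
      using kA[OF that(1,2)] kA[OF that(1,3)] that(4) by (rule mon_eq_if_lookup_eq)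
    show "\<exists>a\<in>A i. cc i a \<noteq> 0" if "i \<in> I" for i
    proof (cases i)
      case None then show ?thesis using a0 unfolding A_def cc_def by auto
    next
      case (Some p)
      then have "p \<noteq> 0" using that unfolding I_def Q_def by auto
      then obtain a where "a \<in> Poly_Mapping.keys p" by (metis keys_eq_empty ex_in_conv)
      then show ?thesis using Some unfolding A_def cc_def by (auto simp: in_keys_iff)
    qed
  qed
  then obtain xi where xi: "\<And>i. i \<in> I \<Longrightarrow> (\<Sum>a\<in>A i. cc i a * (\<Prod>j<m. xi j ^ Poly_Mapping.lookup a j)) \<noteq> 0"
    by blast
  define mv where "mv \<alpha> = (\<Prod>j<m. xi j ^ Poly_Mapping.lookup \<alpha> j)" for \<alpha>
  define \<xi> where "\<xi> j = complex_of_real (xi j)" for j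
  have indep: "alg_indep_Q m \<xi>"
    unfolding alg_indep_Q_def
  proof (intro allI impI)
    fix p :: "(nat \<Rightarrow>\<^sub>0 nat) \<Rightarrow>\<^sub>0 rat"
    assume p: "p \<noteq> 0" "mpoly_vars p \<subseteq> {..<m}"
    then have "Some p \<in> I" unfolding I_def Q_def by auto
    from xi[OF this] have nz: "(\<Sum>a\<in>Poly_Mapping.keys p. real_of_rat (Poly_Mapping.lookup p a) * mv a) \<noteq> 0"
      unfolding A_def cc_def mv_def by simp
    have ev: "mpoly_eval of_rat p \<xi> = complex_of_real (\<Sum>a\<in>Poly_Mapping.keys p. real_of_rat (Poly_Mapping.lookup p a) * mv a)"
      unfolding mpoly_eval_def of_real_sum
    proof (intro sum.cong refl)
      fix a assume a: "a \<in> Poly_Mapping.keys p"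
      then have kk: "Poly_Mapping.keys a \<subseteq> {..<m}" using p(2) unfolding mpoly_vars_def by auto
      show "of_rat (Poly_Mapping.lookup p a) * (\<Prod>i\<in>Poly_Mapping.keys a. \<xi> i ^ Poly_Mapping.lookup a i)
          = complex_of_real (real_of_rat (Poly_Mapping.lookup p a) * mv a)"
        unfolding \<xi>_def mv_def prod_keys_complex[OF kk] of_rat_complex by simp
    qed
    show "mpoly_eval of_rat p \<xi> \<noteq> 0" unfolding ev of_real_eq_0_iff by (rule nz)
  qed
  define S where "S n = (\<Sum>\<alpha>\<in>M. c n \<alpha> * mv \<alpha>)" for n
  have evalS: "cmod (mpoly_eval of_int (P n) \<xi>) = \<bar>S n\<bar>" for n
  proof -
    have "mpoly_eval of_int (P n) \<xi> = complex_of_real (\<Sum>\<alpha>\<in>Poly_Mapping.keys (P n). c n \<alpha> * mv \<alpha>)"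
      unfolding mpoly_eval_def of_real_sum
    proof (intro sum.cong refl)
      fix a assume a: "a \<in> Poly_Mapping.keys (P n)"
      then have "a \<in> M" unfolding M_def by auto
      then have kk: "Poly_Mapping.keys a \<subseteq> {..<m}" by (rule keysM)
      show "of_int (Poly_Mapping.lookup (P n) a) * (\<Prod>i\<in>Poly_Mapping.keys a. \<xi> i ^ Poly_Mapping.lookup a i)
          = complex_of_real (c n a * mv a)"
        unfolding \<xi>_def mv_def prod_keys_complex[OF kk] c_def by simp
    qed
    also have "(\<Sum>\<alpha>\<in>Poly_Mapping.keys (P n). c n \<alpha> * mv \<alpha>) = S n"
      unfolding S_def using finM by (intro sum.mono_neutral_left) (auto simp: M_def c_def in_keys_iff)
    finally show ?thesis by simp
  qed
  define T where "T n = (\<Sum>\<alpha>\<in>M. f n \<alpha> * mv \<alpha>)" for n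
  define L where "L = (\<Sum>\<alpha>\<in>M. u \<alpha> * mv \<alpha>)"
  have "None \<in> I" unfolding I_def by simp
  from xi[OF this] have L0: "L \<noteq> 0" unfolding L_def A_def cc_def mv_def by simp
  have TL: "(\<lambda>k. T (r k)) \<longlonglongrightarrow> L"
    unfolding T_def L_def by (intro tendsto_sum tendsto_mult ru tendsto_const)
  have ST: "S n = N n * T n" if "N n \<noteq> 0" for n
    unfolding S_def T_def f_def sum_distrib_left using that by (intro sum.cong) auto
  have ub: "\<not> bdd_above (range (\<lambda>n. cmod (mpoly_eval of_int (P n) \<xi>)))"
  proof
    assume "bdd_above (range (\<lambda>n. cmod (mpoly_eval of_int (P n) \<xi>)))"
    then obtain K where K: "\<And>n. \<bar>S n\<bar> \<le> K" unfolding bdd_above_def evalS by auto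
    have K0: "K \<ge> 0" using K[of 0] by linarith
    have Lpos: "\<bar>L\<bar> / 2 > 0" using L0 by simp
    have ev1: "eventually (\<lambda>k. \<bar>T (r k)\<bar> > \<bar>L\<bar> / 2) sequentially"
      using tendsto_rabs[OF TL] Lpos by (intro order_tendstoD(1)) auto
    have ev2: "eventually (\<lambda>k. N (r k) > 2 * K / \<bar>L\<bar>) sequentially" by (rule Npos_ev)
    have "eventually (\<lambda>k. False) sequentially"
      using ev1 ev2
    proof eventually_elim
      case (elim k)
      have a0': "2 * K / \<bar>L\<bar> \<ge> 0" using K0 by simp
      then have Nrpos: "N (r k) > 0" using elim(2) by linarith
      then have "N (r k) \<noteq> 0" by simp
      then have "\<bar>S (r k)\<bar> = N (r k) * \<bar>T (r k)\<bar>" using ST N_nonneg by (simp add: abs_mult)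
      also have "\<dots> > (2 * K / \<bar>L\<bar>) * (\<bar>L\<bar> / 2)"
        using elim a0' Lpos Nrpos by (intro mult_strict_mono) auto
      also have "(2 * K / \<bar>L\<bar>) * (\<bar>L\<bar> / 2) = K" using L0 by (simp add: field_simps)
      finally show False using K[of "r k"] by linarith
    qed
    then show False by simp
  qed
  from indep ub show ?thesis by (rule exI[of _ \<xi>, OF conjI])
qed

end
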